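(* Consider TOTATIVE. The nim-value of $n>1$ is the index of the smallest prime divisor of $n$, and $\mathcal{SG}(1)=0$.
   Context: TOTATIVE is the impartial normal-play game on the positive integers where from $n$ a player moves to a smaller relatively prime residue, i.e. to any $k$ with $1\le k<n$ and $\gcd(k,n)=1$; the player unable to move loses. $\mathcal{SG}$ (nim-value) denotes the Sprague-Grundy value (mex rule). Primes are indexed with $2$ having index $1$, $3$ index $2$, etc. *)

theory Defs
  imports "HOL-Computational_Algebra.Primes"
begin

definition mex :: "nat set \<Rightarrow> nat" where
  "mex A = (LEAST m. m \<notin> A)"

text \<open>Sprague-Grundy value of TOTATIVE (positions are positive integers;
  all moves decrease the position, so the recursion is well founded).\<close>
function totative_sg :: "nat \<Rightarrow> nat" where
  "totative_sg n = mex (totative_sg ` {k. 1 \<le> k \<and> k < n \<and> coprime k n})"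
  by auto
termination
  by (relation "measure id") auto

text \<open>Index of a prime: 2 has index 1, 3 has index 2, etc.\<close>
definition prime_index :: "nat \<Rightarrow> nat" where
  "prime_index p = card {q::nat. prime q \<and> q \<le> p}"

end

theory Submission
  imports Defs
begin

declare totative_sg.simps[simp del]

lemma sg_one: "totative_sg 1 = 0"
proof -
  have "{k::nat. 1 \<le> k \<and> k < 1 \<and> coprime k 1} = {}" by auto
  then show ?thesis by (subst totative_sg.simps) (simp only: image_empty, simp add: mex_def)
qed

lemma mex_eq: assumes "i \<notin> A" "{0..<i} \<subseteq> A" shows "mex A = i"
  unfolding mex_def
proof (rule Least_equality)
  show "i \<notin> A" by fact
  fix y assume "y \<notin> A" then show "i \<le> y" using assms(2) by (meson atLeastLessThan_iff not_le subsetD zero_le)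
qed

lemma pi_ge1: assumes "prime (q::nat)" shows "prime_index q \<ge> 1"
proof -
  have "q \<in> {q'::nat. prime q' \<and> q' \<le> q}" using assms by auto
  moreover have "finite {q'::nat. prime q' \<and> q' \<le> q}" by auto
  ultimately show ?thesis unfolding prime_index_def
    by (metis One_nat_def Suc_leI card_gt_0_iff empty_iff)
qed

lemma pi_less: assumes "prime (q::nat)" "prime p" "q < p" shows "prime_index q < prime_index p"
  unfolding prime_index_def
proof (rule psubset_card_mono)
  show "finite {q::nat. prime q \<and> q \<le> p}" by auto
  show "{q'. prime q' \<and> q' \<le> q} \<subset> {q::nat. prime q \<and> q \<le> p}"
  proof -
    have "p \<in> {q::nat. prime q \<and> q \<le> p}" "p \<notin> {q'. prime q' \<and> q' \<le> q}" using assms by auto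
    moreover have "{q'. prime q' \<and> q' \<le> q} \<subseteq> {q::nat. prime q \<and> q \<le> p}" using assms by auto
    ultimately show ?thesis by blast
  qed
qed

lemma pi_inj: assumes "prime (q::nat)" "prime p" "prime_index q = prime_index p" shows "q = p"
  using pi_less[OF assms(1,2)] pi_less[OF assms(2,1)] assms(3) by (metis linorder_neqE_nat less_irrefl)

lemma lpf: assumes "(n::nat) > 1"
  shows "Min (prime_factors n) \<in> prime_factors n" "prime (Min (prime_factors n))"
    "Min (prime_factors n) dvd n"
    "\<And>q. prime q \<Longrightarrow> q dvd n \<Longrightarrow> Min (prime_factors n) \<le> q"
proof -
  have ne: "prime_factors n \<noteq> {}"
  proof -
    obtain p :: nat where "prime p" "p dvd n" using prime_factor_nat[of n] assms by auto
    then have "p \<in> prime_factors n" using assms by (auto simp: in_prime_factors_iff)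
    then show ?thesis by auto
  qed
  show 1: "Min (prime_factors n) \<in> prime_factors n" using ne by simp
  then show "prime (Min (prime_factors n))" "Min (prime_factors n) dvd n" by auto
  fix q :: nat assume "prime q" "q dvd n"
  then have "q \<in> prime_factors n" using assms by (auto simp: in_prime_factors_iff)
  then show "Min (prime_factors n) \<le> q" by simp
qed

lemma pf_prime: assumes "prime (q::nat)" shows "Min (prime_factors q) = q"
  using assms by (simp add: prime_prime_factors)

lemma main: "n > 1 \<Longrightarrow> totative_sg n = prime_index (Min (prime_factors (n::nat)))"
proof (induction n rule: less_induct)
  case (less n)
  define p where "p = Min (prime_factors n)"
  have pp: "prime p" and pd: "p dvd n" and pmin: "\<And>q. prime q \<Longrightarrow> q dvd n \<Longrightarrow> p \<le> q"
    using lpf[OF less.prems] unfolding p_def by auto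
  have pn: "p \<le> n" using pd less.prems by (simp add: dvd_imp_le)
  define A where "A = totative_sg ` {k. 1 \<le> k \<and> k < n \<and> coprime k n}"
  have sg1: "totative_sg 1 = 0"
    by (rule sg_one)
  have IHp: "totative_sg q = prime_index q" if "prime q" "q < n" for q
    using less.IH[OF that(2)] that(1) pf_prime[OF that(1)] prime_gt_1_nat by auto
  have "mex A = prime_index p"
  proof (rule mex_eq)
    show "prime_index p \<notin> A"
    proof
      assume "prime_index p \<in> A"
      then obtain k where k: "1 \<le> k" "k < n" "coprime k n" "totative_sg k = prime_index p"
        unfolding A_def by auto
      show False
      proof (cases "k = 1")
        case True then show False using k sg1 pi_ge1[OF pp] by simp
      next
        case False
        then have k1: "k > 1" using k by simp
        have ih: "totative_sg k = prime_index (Min (prime_factors k))" using less.IH[OF k(2) k1] .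
        have r: "prime (Min (prime_factors k))" "Min (prime_factors k) dvd k" using lpf[OF k1] by auto
        have "prime_index (Min (prime_factors k)) = prime_index p" using ih k(4) by simp
        then have "Min (prime_factors k) = p" by (rule pi_inj[OF r(1) pp])
        then have "is_unit p" using coprime_common_divisor[OF k(3)] r(2) pd by simp
        then show False using pp by simp
      qed
    qed
    show "{0..<prime_index p} \<subseteq> A"
    proof
      fix j assume j: "j \<in> {0..<prime_index p}"
      show "j \<in> A"
      proof (cases "j = 0")
        case True
        have "1 \<in> {k. 1 \<le> k \<and> k < n \<and> coprime k n}" using less.prems by auto
        then have "totative_sg 1 \<in> A" unfolding A_def by (rule imageI)
        then show ?thesis using True sg1 by simp
      next
        case False
        define P where "P = {q::nat. prime q \<and> q < p}"
        have fP: "finite P" unfolding P_def by auto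
        have Peq: "{q::nat. prime q \<and> q \<le> p} = insert p P" unfolding P_def using pp by auto
        have "p \<notin> P" unfolding P_def by auto
        then have cP: "card P = prime_index p - 1" unfolding prime_index_def Peq using fP by simp
        have injP: "inj_on prime_index P" unfolding P_def proof (rule inj_onI)
          fix x y assume "x \<in> {q::nat. prime q \<and> q < p}" "y \<in> {q::nat. prime q \<and> q < p}" "prime_index x = prime_index y"
          then show "x = y" using pi_inj[of x y] by simp
        qed
        have sub: "prime_index ` P \<subseteq> {1..<prime_index p}"
        proof
          fix x assume "x \<in> prime_index ` P"
          then obtain q where "q \<in> P" "x = prime_index q" by blast
          then show "x \<in> {1..<prime_index p}" using pi_ge1[of q] pi_less[of q p] pp unfolding P_def by simp
        qed
        have "card (prime_index ` P) = card {1..<prime_index p}"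
          using card_image[OF injP] cP by simp
        then have "prime_index ` P = {1..<prime_index p}"
          using card_subset_eq[OF _ sub] by simp
        moreover have "j \<in> {1..<prime_index p}" using j False by simp
        ultimately have "j \<in> prime_index ` P" by simp
        then obtain q where q: "q \<in> P" "prime_index q = j" by blast
        have qp: "prime q" "q < p" using q unfolding P_def by auto
        have "\<not> q dvd n"
        proof
          assume "q dvd n" then have "p \<le> q" by (rule pmin[OF qp(1)])
          with qp(2) show False by simp
        qed
        then have "coprime q n" by (rule prime_imp_coprime[OF qp(1)])
        moreover have "q < n" using qp pn by simp
        moreover have "1 \<le> q" using prime_gt_1_nat[OF qp(1)] by simp
        ultimately have "q \<in> {k. 1 \<le> k \<and> k < n \<and> coprime k n}" by auto
        then have "totative_sg q \<in> A" unfolding A_def by (rule imageI)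
        then show ?thesis using IHp[OF qp(1) \<open>q < n\<close>] q(2) by simp
      qed
    qed
  qed
  then show ?case unfolding A_def p_def by (subst totative_sg.simps) simp
qed

theorem mainTheorem6:
  shows "totative_sg 1 = 0 \<and>
    (\<forall>n::nat. n > 1 \<longrightarrow> totative_sg n = prime_index (Min (prime_factors n)))"
proof
  show "totative_sg 1 = 0" by (rule sg_one)
  show "\<forall>n::nat. n > 1 \<longrightarrow> totative_sg n = prime_index (Min (prime_factors n))"
    using main by blast
qed

end
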